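(* Let $X$ be a Banach space and $k\in\mathbb{N}$. Every bounded $k$-sequence $(x_s)_{s\in[\mathbb{N}]^k}$ in $X$ (i.e. $\sup_s\|x_s\|<\infty$) admits a $k$-spreading model: there exist an infinite $M\subseteq\mathbb{N}$ and a seminorm $\|\cdot\|_*$ on $c_{00}(\mathbb{N})$ such that $(x_s)_{s\in[M]^k}$ generates the natural Hamel basis $(e_n)_n$ of $(c_{00}(\mathbb{N}),\|\cdot\|_* )$ as a $k$-spreading model.
   Context: $[M]^k$ denotes the $k$-element subsets of $M\subseteq\mathbb{N}$, each $s$ identified with its increasing enumeration $s(1)<\dots<s(k)$; $M(n)$ denotes the $n$-th element of $M$. A $k$-sequence in $X$ is a map $[\mathbb{N}]^k\to X$, written $(x_s)_{s\in[\mathbb{N}]^k}$; its restriction to $[M]^k$ is written $(x_s)_{s\in[M]^k}$. A finite sequence $(s_j)_{j=1}^l$ in $[M]^k$ is a plegma family if $s_1(i)<\dots<s_l(i)$ for every $1\le i\le k$ and $s_l(i)<s_1(i+1)$ for every $1\le i<k$; $\mathrm{Plm}_l([M]^k)$ is the set of such families of length $l$. Given an infinite-dimensional seminormed space $(E,\|\cdot\|_* )$ with Hamel basis $(e_n)_n$, we say $(x_s)_{s\in[M]^k}$ generates $(e_n)_n$ as a $k$-spreading model if there is a null sequence $(\delta_n)$ of positive reals such that for all $m\le l$, all $(s_j)_{j=1}^m\in\mathrm{Plm}_m([M]^k)$ with $s_1(1)\ge M(l)$ and all $a_1,\dots,a_m\in[-1,1]$: $\big|\|\sum_{j=1}^m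 a_jx_{s_j}\|-\|\sum_{j=1}^m a_je_j\|_*\big|\le\delta_l$. A $k$-sequence admits $(e_n)$ as a $k$-spreading model if some $(x_s)_{s\in[M]^k}$ generates it. *)

theory Defs
  imports "HOL-Analysis.Analysis" "HOL-Library.Infinite_Set"
begin

definition ksubsets :: "nat set \<Rightarrow> nat \<Rightarrow> nat set set" where
  "ksubsets M k = {s. s \<subseteq> M \<and> finite s \<and> card s = k}"

definition elem :: "nat set \<Rightarrow> nat \<Rightarrow> nat" where
  "elem s i = sorted_list_of_set s ! (i - 1)"

definition nth_el :: "nat set \<Rightarrow> nat \<Rightarrow> nat" where
  "nth_el M n = enumerate M (n - 1)"

definition plegma :: "nat \<Rightarrow> nat set \<Rightarrow> nat \<Rightarrow> (nat \<Rightarrow> nat set) \<Rightarrow> bool" where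
  "plegma l M k F \<longleftrightarrow>
     (\<forall>j\<in>{1..l}. F j \<in> ksubsets M k) \<and>
     (\<forall>i\<in>{1..k}. \<forall>j\<in>{1..<l}. elem (F j) i < elem (F (Suc j)) i) \<and>
     (\<forall>i\<in>{1..<k}. elem (F l) i < elem (F 1) (Suc i))"

text \<open>c00(N): finitely supported real sequences; coordinate j-1 corresponds to e_j.\<close>
definition c00 :: "(nat \<Rightarrow> real) set" where
  "c00 = {f. finite {i. f i \<noteq> 0}}"

definition seminorm_c00 :: "((nat \<Rightarrow> real) \<Rightarrow> real) \<Rightarrow> bool" where
  "seminorm_c00 N \<longleftrightarrow>
     (\<forall>f\<in>c00. 0 \<le> N f) \<and>
     (\<forall>f\<in>c00. \<forall>c. N (\<lambda>i. c * f i) = \<bar>c\<bar> * N f) \<and>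
     (\<forall>f\<in>c00. \<forall>g\<in>c00. N (\<lambda>i. f i + g i) \<le> N f + N g)"

text \<open>The vector \<Sum>_{j=1}^m a_j e_j of c00, where e_j is the unit vector at coordinate j-1.\<close>
definition comb_e :: "nat \<Rightarrow> (nat \<Rightarrow> real) \<Rightarrow> (nat \<Rightarrow> real)" where
  "comb_e m a = (\<lambda>i. if i < m then a (Suc i) else 0)"

definition generates_ksm ::
  "(nat set \<Rightarrow> 'a::real_normed_vector) \<Rightarrow> nat set \<Rightarrow> nat \<Rightarrow> ((nat \<Rightarrow> real) \<Rightarrow> real) \<Rightarrow> bool" where
  "generates_ksm x M k N \<longleftrightarrow>
     (\<exists>\<delta>::nat \<Rightarrow> real. (\<forall>n. 0 < \<delta> n) \<and> \<delta> \<longlonglongrightarrow> 0 \<and>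
       (\<forall>l m F a. 1 \<le> m \<and> m \<le> l \<and> plegma m M k F \<and> elem (F 1) 1 \<ge> nth_el M l \<and>
          (\<forall>j\<in>{1..m}. \<bar>a j\<bar> \<le> 1) \<longrightarrow>
          \<bar>norm (\<Sum>j=1..m. a j *\<^sub>R x (F j)) - N (comb_e m a)\<bar> \<le> \<delta> l))"

end

theory Submission
  imports Defs "HOL-Library.Ramsey"
begin

lemma sorted_image_interval:
  assumes "\<forall>p q. p < q \<longrightarrow> q < n \<longrightarrow> u p < (u q::nat)"
  shows "sorted_list_of_set (u ` {0..<n}) = map u [0..<n]"
proof -
  have inj: "inj_on u {0..<n}"
    unfolding inj_on_def by (metis assms atLeastLessThan_iff less_irrefl nat_neq_iff)
  have "sorted_wrt (<) (map u [0..<n])"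
    unfolding sorted_wrt_iff_nth_less using assms by auto
  moreover have "length (map u [0..<n]) = card (u ` {0..<n})"
    using card_image[OF inj] by simp
  ultimately show ?thesis
    using sorted_list_of_set_unique[of "u ` {0..<n}" "map u [0..<n]"] by auto
qed

lemma elem_image_interval:
  assumes "\<forall>p q. p < q \<longrightarrow> q < n \<longrightarrow> u p < (u q::nat)" "p < n"
  shows "elem (u ` {0..<n}) (Suc p) = u p"
  using sorted_image_interval[OF assms(1)] assms(2) by (simp add: elem_def)

lemma elem_set:
  assumes "finite s" "card s = k"
  shows "elem s ` {1..k} = s"
proof -
  let ?xs = "sorted_list_of_set s"
  have "s = set ?xs" using assms by simp
  also have "\<dots> = (\<lambda>i. ?xs ! i) ` {0..<k}" using assms by (simp add: set_conv_nth atLeast0LessThan) blast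
  also have "\<dots> = elem s ` {1..k}" unfolding elem_def
    by (force simp: image_iff intro: rev_bexI[of "_ - 1"])
  finally show ?thesis by simp
qed

lemma elem_strict:
  assumes "finite s" "card s = k" "1 \<le> i" "i < j" "j \<le> k"
  shows "elem s i < elem s j"
proof -
  have "sorted_wrt (<) (sorted_list_of_set s)" by simp
  then show ?thesis using assms unfolding elem_def sorted_wrt_iff_nth_less by auto
qed

lemma elem_in:
  assumes "finite s" "card s = k" "1 \<le> i" "i \<le> k"
  shows "elem s i \<in> s"
  using elem_set[OF assms(1,2)] assms(3,4) by auto

lemma divmod_aux: "r < (m::nat) \<Longrightarrow> (q*m + r) mod m = r \<and> (q*m + r) div m = q"
  by auto

definition fam :: "nat \<Rightarrow> (nat \<Rightarrow> nat) \<Rightarrow> nat \<Rightarrow> nat \<Rightarrow> nat set" where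
  "fam k u m j = (\<lambda>i. u ((i-1)*m + (j-1))) ` {1..k}"

definition strict_on :: "nat \<Rightarrow> (nat \<Rightarrow> nat) \<Rightarrow> bool" where
  "strict_on n u \<longleftrightarrow> (\<forall>p q. p < q \<longrightarrow> q < n \<longrightarrow> u p < u q)"

lemma fam_alt:
  "fam k u m j = (\<lambda>i. u (i*m + (j-1))) ` {0..<k}"
  unfolding fam_def
  by (force simp: image_iff intro: rev_bexI[of "_ - 1"] rev_bexI[of "Suc _"])

lemma strict_on_step:
  assumes "\<And>p. Suc p < n \<Longrightarrow> u p < u (Suc p)"
  shows "strict_on n u"
  unfolding strict_on_def
proof (intro allI impI)
  fix p q assume "p < q" "q < n"
  then show "u p < u q"
  proof (induction q)
    case 0 then show ?case by simp
  next
    case (Suc q)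
    then show ?case using assms by (metis Suc_lessD less_Suc_eq order.strict_trans)
  qed
qed

lemma fam_elem:
  assumes "strict_on (k*m) u" "1 \<le> j" "j \<le> m" "1 \<le> i" "i \<le> k"
  shows "elem (fam k u m j) i = u ((i-1)*m + (j-1))"
proof -
  have st: "\<forall>p q. p < q \<longrightarrow> q < k \<longrightarrow> u (p*m + (j-1)) < u (q*m + (j-1))"
  proof (intro allI impI)
    fix p q assume pq: "p < q" "q < k"
    have "m > 0" using assms by simp
    then have "p*m < q*m" using pq by simp
    then have "p*m + (j-1) < q*m + (j-1)" by simp
    moreover have "q*m + (j-1) < k*m"
    proof -
      have "q*m + (j-1) < q*m + m" using assms by simp
      also have "\<dots> = (Suc q)*m" by simp
      also have "\<dots> \<le> k*m" using pq by (intro mult_le_mono1) simp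
      finally show ?thesis .
    qed
    ultimately show "u (p*m + (j-1)) < u (q*m + (j-1))"
      using assms(1) unfolding strict_on_def by blast
  qed
  have "elem (fam k u m j) (Suc (i-1)) = u ((i-1)*m + (j-1))"
    unfolding fam_alt
    by (rule elem_image_interval[where u="\<lambda>i. u (i*m + (j-1))", OF st]) (use assms in simp)
  then show ?thesis using assms by simp
qed

lemma fam_ksub:
  assumes "strict_on (k*m) u" "\<forall>p<k*m. u p \<in> M" "1 \<le> j" "j \<le> m"
  shows "fam k u m j \<in> ksubsets M k"
proof -
  have idx: "i*m + (j-1) < k*m" if "i < k" for i
  proof -
    have "i*m + (j-1) < i*m + m" using assms by simp
    also have "\<dots> = (Suc i)*m" by simp
    also have "\<dots> \<le> k*m" using that by (intro mult_le_mono1) simp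
    finally show ?thesis .
  qed
  have "m > 0" using assms by simp
  have inj: "inj_on (\<lambda>i. u (i*m + (j-1))) {0..<k}"
  proof (rule inj_onI)
    fix p q assume pq: "p \<in> {0..<k}" "q \<in> {0..<k}" "u (p*m + (j-1)) = u (q*m + (j-1))"
    show "p = q"
    proof (rule ccontr)
      assume "p \<noteq> q"
      then consider "p < q" | "q < p" by linarith
      then show False
      proof cases
        case 1
        then have "p*m < q*m" using \<open>m>0\<close> by simp
        then have lt: "p*m + (j-1) < q*m + (j-1)" by simp
        have "q*m + (j-1) < k*m" using idx pq by simp
        then have "u (p*m + (j-1)) < u (q*m + (j-1))"
          using assms(1) lt unfolding strict_on_def by blast
        then show False using pq by simp
      next
        case 2
        then have "q*m < p*m" using \<open>m>0\<close> by simp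
        then have lt: "q*m + (j-1) < p*m + (j-1)" by simp
        have "p*m + (j-1) < k*m" using idx pq by simp
        then have "u (q*m + (j-1)) < u (p*m + (j-1))"
          using assms(1) lt unfolding strict_on_def by blast
        then show False using pq by simp
      qed
    qed
  qed
  show ?thesis unfolding ksubsets_def fam_alt
    using card_image[OF inj] idx assms(2) by auto
qed

lemma fam_plegma:
  assumes "strict_on (k*m) u" "\<forall>p<k*m. u p \<in> M" "1 \<le> m" "1 \<le> k"
  shows "plegma m M k (fam k u m)"
  unfolding plegma_def
proof (intro conjI ballI)
  fix j assume "j \<in> {1..m}"
  then show "fam k u m j \<in> ksubsets M k" using fam_ksub[OF assms(1,2)] by auto
next
  fix i j assume ij: "i \<in> {1..k}" "j \<in> {1..<m}"
  have "(i-1)*m + (j-1) < (i-1)*m + j" using ij by auto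
  moreover have "(i-1)*m + j < k*m"
  proof -
    have "(i-1)*m + j < (i-1)*m + m" using ij by simp
    also have "\<dots> = i*m" using ij by (cases i) auto
    also have "\<dots> \<le> k*m" using ij by simp
    finally show ?thesis .
  qed
  ultimately have "u ((i-1)*m + (j-1)) < u ((i-1)*m + (Suc j - 1))"
    using assms(1) unfolding strict_on_def by auto
  then show "elem (fam k u m j) i < elem (fam k u m (Suc j)) i"
    using fam_elem[OF assms(1)] ij by auto
next
  fix i assume i: "i \<in> {1..<k}"
  have "(i-1)*m + (m-1) < (Suc i - 1)*m + (1-1)" using i assms by (cases i) auto
  moreover have "(Suc i - 1)*m + (1-1) < k*m"
  proof -
    have "i*m < k*m" using i assms by simp
    then show ?thesis by simp
  qed
  ultimately have "u ((i-1)*m + (m-1)) < u ((Suc i - 1)*m + (1-1))"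
    using assms(1) unfolding strict_on_def by blast
  then show "elem (fam k u m m) i < elem (fam k u m 1) (Suc i)"
    using fam_elem[OF assms(1)] i assms by auto
qed

lemma plegma_fam:
  assumes "plegma m M k F" "1 \<le> m" "1 \<le> k"
  defines "u \<equiv> \<lambda>p. elem (F (p mod m + 1)) (p div m + 1)"
  shows "strict_on (k*m) u" "\<forall>p<k*m. u p \<in> M" "\<forall>j\<in>{1..m}. F j = fam k u m j"
proof -
  have F: "F j \<in> ksubsets M k" if "j \<in> {1..m}" for j
    using assms(1) that unfolding plegma_def by auto
  have c2: "\<forall>i\<in>{1..k}. \<forall>j\<in>{1..<m}. elem (F j) i < elem (F (Suc j)) i"
   and c3: "\<forall>i\<in>{1..<k}. elem (F m) i < elem (F 1) (Suc i)"
    using assms(1) unfolding plegma_def by auto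
  have mpos: "m > 0" using assms by simp
  have divk: "p div m < k" if "p < k*m" for p
    using that by (metis div_less_iff_less_mult mpos)
  show "strict_on (k*m) u"
  proof (rule strict_on_step)
    fix p assume sp: "Suc p < k*m"
    show "u p < u (Suc p)"
    proof (cases "Suc (p mod m) = m")
      case True
      then have a: "Suc p mod m = 0" "Suc p div m = Suc (p div m)"
        by (simp_all add: mod_Suc div_Suc)
      have "Suc (p div m) < k" using divk[OF sp] a by simp
      then have "elem (F m) (p div m + 1) < elem (F 1) (Suc (p div m + 1))"
        using c3 by auto
      then show ?thesis unfolding u_def using a True by simp
    next
      case False
      then have a: "Suc p mod m = Suc (p mod m)" "Suc p div m = p div m"
        by (simp_all add: mod_Suc div_Suc)
      have "p mod m + 1 < m" using False mod_less_divisor[OF mpos, of p] by linarith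
      moreover have "p div m + 1 \<le> k" using divk sp by (metis Suc_eq_plus1 Suc_leI Suc_lessD)
      ultimately have "elem (F (p mod m + 1)) (p div m + 1) < elem (F (Suc (p mod m + 1))) (p div m + 1)"
        using c2 by auto
      then show ?thesis unfolding u_def using a by simp
    qed
  qed
  show "\<forall>p<k*m. u p \<in> M"
  proof (intro allI impI)
    fix p assume p: "p < k*m"
    have j: "p mod m + 1 \<in> {1..m}" using mod_less_divisor[OF mpos, of p] by auto
    have "p div m + 1 \<le> k" using divk[OF p] by simp
    then have "u p \<in> F (p mod m + 1)" unfolding u_def
      using F[OF j] by (intro elem_in[of _ k]) (auto simp: ksubsets_def)
    then show "u p \<in> M" using F[OF j] by (auto simp: ksubsets_def)
  qed
  show "\<forall>j\<in>{1..m}. F j = fam k u m j"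
  proof
    fix j assume j: "j \<in> {1..m}"
    have "fam k u m j = elem (F j) ` {1..k}" unfolding fam_def
    proof (rule image_cong[OF refl])
      fix i assume i: "i \<in> {1..k}"
      have "j - 1 < m" using j by auto
      then have A: "((i-1)*m + (j-1)) mod m = j - 1" and B: "((i-1)*m + (j-1)) div m = i - 1"
        using divmod_aux by blast+
      have "u ((i-1)*m + (j-1)) = elem (F (j-1+1)) (i-1+1)"
        unfolding u_def A B by (rule refl)
      then show "u ((i-1)*m + (j-1)) = elem (F j) i"
        using i j by simp
    qed
    also have "\<dots> = F j" using F[OF j] elem_set by (auto simp: ksubsets_def)
    finally show "F j = fam k u m j" by simp
  qed
qed


definition nm :: "(nat set \<Rightarrow> 'a::real_normed_vector) \<Rightarrow> (nat \<Rightarrow> nat set) \<Rightarrow> nat \<Rightarrow> (nat \<Rightarrow> real) \<Rightarrow> real" where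
  "nm x F m a = norm (\<Sum>j=1..m. a j *\<^sub>R x (F j))"

lemma plegma_sub: "plegma m M k F \<Longrightarrow> j \<in> {1..m} \<Longrightarrow> F j \<in> ksubsets UNIV k"
  unfolding plegma_def ksubsets_def by auto

lemma plegma_mono: "plegma m M k F \<Longrightarrow> M \<subseteq> M' \<Longrightarrow> plegma m M' k F"
  unfolding plegma_def ksubsets_def by blast

lemma nm_bound:
  assumes "plegma m M k F" "\<forall>s\<in>ksubsets UNIV k. norm (x s) \<le> C" "\<forall>j\<in>{1..m}. \<bar>a j\<bar> \<le> B"
  shows "nm x F m a \<le> m * (B * C)"
proof -
  have "nm x F m a \<le> (\<Sum>j=1..m. norm (a j *\<^sub>R x (F j)))"
    unfolding nm_def by (rule norm_sum)
  also have "\<dots> \<le> (\<Sum>j=1..m. B * C)"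
  proof (rule sum_mono)
    fix j assume j: "j \<in> {1..m}"
    have "\<bar>a j\<bar> * norm (x (F j)) \<le> B * C"
      using assms(2,3) plegma_sub[OF assms(1) j] j
      by (intro mult_mono) auto
    then show "norm (a j *\<^sub>R x (F j)) \<le> B * C" by simp
  qed
  finally show ?thesis by simp
qed

lemma nm_lip:
  assumes "plegma m M k F" "\<forall>s\<in>ksubsets UNIV k. norm (x s) \<le> C" "\<forall>j\<in>{1..m}. \<bar>a j - b j\<bar> \<le> B"
  shows "\<bar>nm x F m a - nm x F m b\<bar> \<le> m * (B * C)"
proof -
  have "\<bar>nm x F m a - nm x F m b\<bar> \<le> norm ((\<Sum>j=1..m. a j *\<^sub>R x (F j)) - (\<Sum>j=1..m. b j *\<^sub>R x (F j)))"
    unfolding nm_def by (rule norm_triangle_ineq3)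
  also have "(\<Sum>j=1..m. a j *\<^sub>R x (F j)) - (\<Sum>j=1..m. b j *\<^sub>R x (F j)) = (\<Sum>j=1..m. (a j - b j) *\<^sub>R x (F j))"
    by (simp add: sum_subtractf scaleR_diff_left)
  also have "norm \<dots> = nm x F m (\<lambda>j. a j - b j)" unfolding nm_def by simp
  also have "\<dots> \<le> m * (B * C)" using nm_bound[OF assms(1,2)] assms(3) by simp
  finally show ?thesis .
qed

lemma stab1:
  fixes g :: "nat set \<Rightarrow> real"
  assumes "infinite M" "\<forall>S. finite S \<and> card S = d \<longrightarrow> \<bar>g S\<bar> \<le> B" "e > 0"
  shows "\<exists>M'\<subseteq>M. infinite M' \<and> (\<forall>S\<in>ksubsets M' d. \<forall>T\<in>ksubsets M' d. \<bar>g S - g T\<bar> \<le> e)"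
proof -
  define c where "c S = nat \<lfloor>(g S + B) / e\<rfloor>" for S
  define s where "s = nat \<lfloor>2 * B / e\<rfloor> + 1"
  have "\<forall>X. X \<subseteq> M \<and> finite X \<and> card X = d \<longrightarrow> c X < s"
  proof (intro allI impI)
    fix X assume "X \<subseteq> M \<and> finite X \<and> card X = d"
    then have "\<bar>g X\<bar> \<le> B" using assms(2) by auto
    then have "(g X + B) / e \<le> 2 * B / e" using assms(3) by (simp add: divide_right_mono)
    then have "\<lfloor>(g X + B) / e\<rfloor> \<le> \<lfloor>2 * B / e\<rfloor>" by (rule floor_mono)
    then show "c X < s" unfolding c_def s_def by linarith
  qed
  from Ramsey[OF assms(1) this] obtain Y t where Y: "Y \<subseteq> M" "infinite Y"
    "\<forall>X. X \<subseteq> Y \<and> finite X \<and> card X = d \<longrightarrow> c X = t" by blast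
  have "\<bar>g S - g T\<bar> \<le> e" if S: "S \<in> ksubsets Y d" and T: "T \<in> ksubsets Y d" for S T
  proof -
    have eq: "c S = c T" using Y(3) S T unfolding ksubsets_def by auto
    have nn: "0 \<le> (g S + B) / e" "0 \<le> (g T + B) / e"
      using assms(2,3) S T unfolding ksubsets_def by (auto intro!: divide_nonneg_pos simp: abs_le_iff)
    then have "\<lfloor>(g S + B) / e\<rfloor> = \<lfloor>(g T + B) / e\<rfloor>"
      using eq unfolding c_def by (simp add: nat_eq_iff2)
    then have "\<bar>(g S + B) / e - (g T + B) / e\<bar> < 1"
      by linarith
    moreover have "(g S + B) / e - (g T + B) / e = (g S - g T) / e" by (simp add: add_divide_distrib diff_divide_distrib)
    ultimately have "\<bar>(g S - g T) / e\<bar> < 1" by simp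
    then have "\<bar>g S - g T\<bar> / e < 1" using assms(3) by simp
    then show ?thesis using assms(3) by (simp add: divide_less_eq)
  qed
  then show ?thesis using Y by blast
qed

lemma stab_fin:
  fixes g :: "'b \<Rightarrow> nat set \<Rightarrow> real"
  assumes "finite A" "infinite M" "\<forall>b\<in>A. \<forall>S. finite S \<and> card S = d \<longrightarrow> \<bar>g b S\<bar> \<le> B" "e > 0"
  shows "\<exists>M'\<subseteq>M. infinite M' \<and> (\<forall>b\<in>A. \<forall>S\<in>ksubsets M' d. \<forall>T\<in>ksubsets M' d. \<bar>g b S - g b T\<bar> \<le> e)"
  using assms(1,2,3)
proof (induction A arbitrary: M rule: finite_induct)
  case empty then show ?case by blast
next
  case (insert b A)
  from insert.IH[OF insert.prems(1)] insert.prems(2) obtain M1 where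
    M1: "M1 \<subseteq> M" "infinite M1" "\<forall>b\<in>A. \<forall>S\<in>ksubsets M1 d. \<forall>T\<in>ksubsets M1 d. \<bar>g b S - g b T\<bar> \<le> e"
    by auto
  from stab1[OF M1(2), of d "g b" B, OF _ assms(4)] insert.prems(2) obtain M2 where
    M2: "M2 \<subseteq> M1" "infinite M2" "\<forall>S\<in>ksubsets M2 d. \<forall>T\<in>ksubsets M2 d. \<bar>g b S - g b T\<bar> \<le> e"
    by auto
  have sub: "ksubsets M2 d \<subseteq> ksubsets M1 d" using M2(1) unfolding ksubsets_def by auto
  show ?case using M1 M2 sub by (intro exI[of _ M2]) blast
qed


definition us :: "nat set \<Rightarrow> nat \<Rightarrow> nat" where
  "us S = (\<lambda>p. elem S (Suc p))"

lemma us_props: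
  assumes "finite S" "card S = n"
  shows "strict_on n (us S)" "\<forall>p<n. us S p \<in> S"
proof -
  have sw: "sorted_wrt (<) (sorted_list_of_set S)" by simp
  have len: "length (sorted_list_of_set S) = n" using assms by simp
  show "strict_on n (us S)" unfolding strict_on_def us_def elem_def
    using sw len unfolding sorted_wrt_iff_nth_less by auto
  show "\<forall>p<n. us S p \<in> S"
  proof (intro allI impI)
    fix p assume "p < n"
    then have "sorted_list_of_set S ! p \<in> set (sorted_list_of_set S)" using len by (intro nth_mem) simp
    then show "us S p \<in> S" unfolding us_def elem_def using assms(1) by simp
  qed
qed

lemma fam_cong:
  assumes "\<forall>p<k*m. u p = v p" "j \<in> {1..m}"
  shows "fam k u m j = fam k v m j"
  unfolding fam_alt
proof (rule image_cong[OF refl])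
  fix i assume i: "i \<in> {0..<k}"
  have "i*m + (j-1) < i*m + m" using assms by auto
  also have "\<dots> = (Suc i)*m" by simp
  also have "\<dots> \<le> k*m" using i by (intro mult_le_mono1) simp
  finally show "u (i*m + (j-1)) = v (i*m + (j-1))" using assms by simp
qed

lemma plegma_to_set:
  assumes "plegma m M k F" "1 \<le> m" "1 \<le> k"
  shows "\<exists>S\<in>ksubsets M (k*m). \<forall>j\<in>{1..m}. F j = fam k (us S) m j"
proof -
  define u where "u \<equiv> \<lambda>p. elem (F (p mod m + 1)) (p div m + 1)"
  note P = plegma_fam[OF assms, folded u_def]
  define S where "S = u ` {0..<k*m}"
  have inj: "inj_on u {0..<k*m}"
    unfolding inj_on_def using P(1) unfolding strict_on_def
    by (metis atLeastLessThan_iff less_irrefl nat_neq_iff)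
  have P2: "\<forall>p<k*m. u p \<in> M" using P(2) unfolding u_def by simp
  have "S \<subseteq> M" unfolding S_def using P2 by auto
  then have "S \<in> ksubsets M (k*m)" unfolding ksubsets_def using card_image[OF inj] unfolding S_def by auto
  moreover have "\<forall>p<k*m. us S p = u p"
    unfolding us_def S_def using elem_image_interval P(1) unfolding strict_on_def by blast
  then have "\<forall>j\<in>{1..m}. F j = fam k (us S) m j" using P(3) fam_cong by metis
  ultimately show ?thesis by blast
qed

definition Stb :: "(nat set \<Rightarrow> 'a::real_normed_vector) \<Rightarrow> nat \<Rightarrow> nat \<Rightarrow> real \<Rightarrow> nat set \<Rightarrow> bool" where
  "Stb x k m e M \<longleftrightarrow> (\<forall>F G a. plegma m M k F \<longrightarrow> plegma m M k G \<longrightarrow> (\<forall>j\<in>{1..m}. \<bar>a j\<bar> \<le> 1) \<longrightarrow>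
      \<bar>nm x F m a - nm x G m a\<bar> \<le> e)"

lemma Stb_mono: "Stb x k m e M \<Longrightarrow> M' \<subseteq> M \<Longrightarrow> Stb x k m e M'"
  unfolding Stb_def using plegma_mono by blast

lemma nm_cong: "(\<forall>j\<in>{1..m}. F j = G j) \<Longrightarrow> nm x F m a = nm x G m a"
  unfolding nm_def by (metis (no_types, lifting) sum.cong)

lemma nm_cong2: "(\<forall>j\<in>{1..m}. a j = b j) \<Longrightarrow> nm x F m a = nm x F m b"
  unfolding nm_def by (metis (no_types, lifting) sum.cong)

lemma stab:
  assumes "1 \<le> k" "1 \<le> m" "e > 0" "infinite M" "\<forall>s\<in>ksubsets UNIV k. norm (x s) \<le> C" "C \<ge> 0"
  shows "\<exists>M'\<subseteq>M. infinite M' \<and> Stb x k m e M'"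
proof -
  define q :: nat where "q = nat \<lceil>3*m*C/e\<rceil> + 1"
  have qpos: "real q > 0" unfolding q_def by simp
  have "3*m*C/e \<le> real q" unfolding q_def by linarith
  then have "3*m*C \<le> real q * e" using assms(3) by (simp add: divide_le_eq)
  then have h: "3*real m*C \<le> real q * e" by simp
  have qb: "real m * ((1 / real q) * C) \<le> e/3"
  proof -
    have "real m * ((1/real q)*C) = (real m * C)/real q" by simp
    also have "\<dots> \<le> e/3" using h qpos by (simp add: pos_divide_le_eq mult_ac)
    finally show ?thesis .
  qed
  define Gr where "Gr = (\<lambda>r::int. real_of_int r / real q) ` {-int q..int q}"
  define A where "A = PiE {1..m} (\<lambda>_. Gr)"
  have finA: "finite A" unfolding A_def Gr_def by (rule finite_PiE) auto
  define g where "g b S = nm x (fam k (us S) m) m b" for b S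
  have Gr1: "\<bar>y\<bar> \<le> 1" if "y \<in> Gr" for y
  proof -
    from that obtain r where r: "r \<in> {-int q..int q}" "y = real_of_int r / real q" unfolding Gr_def by auto
    have "\<bar>real_of_int r\<bar> \<le> real q" using r(1) by auto
    then have "\<bar>real_of_int r\<bar> / real q \<le> real q / real q" using qpos by (intro divide_right_mono) auto
    moreover have "\<bar>y\<bar> = \<bar>real_of_int r\<bar> / real q" using r(2) qpos by simp
    ultimately show ?thesis using qpos by simp
  qed
  have bnd: "\<forall>b\<in>A. \<forall>S::nat set. finite S \<and> card S = k*m \<longrightarrow> \<bar>g b S\<bar> \<le> m * (1 * C)"
  proof (intro ballI allI impI)
    fix b and S :: "nat set" assume b: "b \<in> A" and S: "finite S \<and> card S = k*m"
    have pl: "plegma m UNIV k (fam k (us S) m)"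
      using us_props[of S "k*m"] S assms by (intro fam_plegma) auto
    have "\<forall>j\<in>{1..m}. \<bar>b j\<bar> \<le> 1" using b Gr1 unfolding A_def by (auto simp: PiE_iff)
    from nm_bound[OF pl assms(5) this] have "g b S \<le> m * (1 * C)" unfolding g_def by simp
    moreover have "g b S \<ge> 0" unfolding g_def nm_def by simp
    ultimately show "\<bar>g b S\<bar> \<le> m * (1 * C)" by simp
  qed
  have e3: "e/3 > 0" using assms by simp
  from stab_fin[OF finA assms(4) bnd e3] obtain M' where M': "M' \<subseteq> M" "infinite M'"
    "\<forall>b\<in>A. \<forall>S\<in>ksubsets M' (k*m). \<forall>T\<in>ksubsets M' (k*m). \<bar>g b S - g b T\<bar> \<le> e/3" by blast
  have "Stb x k m e M'" unfolding Stb_def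
  proof (intro allI impI)
    fix F G and a :: "nat \<Rightarrow> real" assume F: "plegma m M' k F" and G: "plegma m M' k G" and a: "\<forall>j\<in>{1..m}. \<bar>a j\<bar> \<le> 1"
    define b where "b = restrict (\<lambda>j. real_of_int (round (a j * q)) / real q) {1..m}"
    have bA: "b \<in> A" and ab: "\<forall>j\<in>{1..m}. \<bar>a j - b j\<bar> \<le> 1 / real q"
    proof -
      have "b j \<in> Gr \<and> \<bar>a j - b j\<bar> \<le> 1 / real q" if j: "j \<in> {1..m}" for j
      proof -
        let ?y = "a j * q"
        have r: "\<bar>real_of_int (round ?y) - ?y\<bar> \<le> 1/2" by (rule of_int_round_abs_le)
        have "\<bar>?y\<bar> \<le> q" using a j qpos by (simp add: abs_mult mult_le_cancel_right1)
        then have "real_of_int (round ?y) < real q + 1" "real_of_int (round ?y) > - real q - 1"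
          using r by linarith+
        then have "round ?y \<le> int q" "round ?y \<ge> - int q" by linarith+
        then have "b j \<in> Gr" unfolding b_def Gr_def using j by auto
        moreover have "\<bar>a j - b j\<bar> = \<bar>?y - real_of_int (round ?y)\<bar> / q"
          unfolding b_def using j qpos by (simp add: field_simps)
        moreover have "\<bar>?y - real_of_int (round ?y)\<bar> / q \<le> 1 / q"
          using r qpos by (intro divide_right_mono) (auto simp: abs_minus_commute)
        ultimately show ?thesis by simp
      qed
      then show "b \<in> A" "\<forall>j\<in>{1..m}. \<bar>a j - b j\<bar> \<le> 1 / real q"
        unfolding A_def by (auto simp: PiE_iff b_def)
    qed
    obtain SF where SF: "SF \<in> ksubsets M' (k*m)" "\<forall>j\<in>{1..m}. F j = fam k (us SF) m j"
      using plegma_to_set[OF F assms(2,1)] by blast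
    obtain SG where SG: "SG \<in> ksubsets M' (k*m)" "\<forall>j\<in>{1..m}. G j = fam k (us SG) m j"
      using plegma_to_set[OF G assms(2,1)] by blast
    have eF: "nm x F m b = g b SF" unfolding g_def using nm_cong SF(2) by blast
    have eG: "nm x G m b = g b SG" unfolding g_def using nm_cong SG(2) by blast
    have 1: "\<bar>nm x F m a - nm x F m b\<bar> \<le> e/3"
      using nm_lip[OF F assms(5) ab] qb by linarith
    have 2: "\<bar>nm x G m a - nm x G m b\<bar> \<le> e/3"
      using nm_lip[OF G assms(5) ab] qb by linarith
    have 3: "\<bar>g b SF - g b SG\<bar> \<le> e/3" using M'(3) bA SF(1) SG(1) by blast
    show "\<bar>nm x F m a - nm x G m a\<bar> \<le> e" using 1 2 3 eF eG by linarith
  qed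
  then show ?thesis using M' by blast
qed


lemma plegma_cong:
  assumes "\<forall>j\<in>{1..m}. F j = G j" "1 \<le> m"
  shows "plegma m M k F = plegma m M k G"
proof -
  have "F m = G m" "F 1 = G 1" using assms by auto
  moreover have "\<forall>j\<in>{1..<m}. F j = G j \<and> F (Suc j) = G (Suc j)" using assms by auto
  ultimately show ?thesis unfolding plegma_def using assms(1) by auto
qed

lemma plegma_trunc:
  assumes "plegma n M k G" "1 \<le> m" "m \<le> n"
  shows "plegma m M k G"
proof -
  have c2: "\<forall>i\<in>{1..k}. \<forall>j\<in>{1..<n}. elem (G j) i < elem (G (Suc j)) i"
   and c3: "\<forall>i\<in>{1..<k}. elem (G n) i < elem (G 1) (Suc i)"
    using assms(1) unfolding plegma_def by auto
  have le: "elem (G m) i \<le> elem (G j) i" if "i \<in> {1..k}" "m \<le> j" "j \<le> n" for i j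
    using that
  proof (induction j)
    case 0 then show ?case by simp
  next
    case (Suc j)
    show ?case
    proof (cases "m = Suc j")
      case True then show ?thesis by simp
    next
      case False
      then have "m \<le> j" using Suc by simp
      then have "elem (G m) i \<le> elem (G j) i" using Suc by simp
      moreover have "elem (G j) i < elem (G (Suc j)) i" using c2 Suc \<open>m \<le> j\<close> assms(2) by auto
      ultimately show ?thesis by simp
    qed
  qed
  show ?thesis unfolding plegma_def
  proof (intro conjI ballI)
    fix j assume "j \<in> {1..m}" then show "G j \<in> ksubsets M k" using assms unfolding plegma_def by auto
  next
    fix i j assume "i \<in> {1..k}" "j \<in> {1..<m}"
    then show "elem (G j) i < elem (G (Suc j)) i" using c2 assms by auto
  next
    fix i assume i: "i \<in> {1..<k}"
    have "elem (G m) i \<le> elem (G n) i" using le[of i n] i assms by auto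
    then show "elem (G m) i < elem (G 1) (Suc i)" using c3 i by fastforce
  qed
qed

lemma plegma_restrict:
  assumes "plegma m M k F" "1 \<le> m" "1 \<le> k" "b \<le> elem (F 1) 1"
  shows "plegma m {y\<in>M. b \<le> y} k F"
proof -
  define u where "u \<equiv> \<lambda>p. elem (F (p mod m + 1)) (p div m + 1)"
  note P = plegma_fam[OF assms(1-3), folded u_def]
  have P2: "\<forall>p<k*m. u p \<in> M" using P(2) unfolding u_def by simp
  have u0: "u 0 = elem (F 1) 1" unfolding u_def by simp
  have "\<forall>p<k*m. u p \<in> {y\<in>M. b \<le> y}"
  proof (intro allI impI)
    fix p assume p: "p < k*m"
    have "u 0 \<le> u p" using P(1) p unfolding strict_on_def by (metis le_refl less_imp_le_nat neq0_conv)
    then show "u p \<in> {y\<in>M. b \<le> y}" using P2 p u0 assms(4) by auto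
  qed
  from fam_plegma[OF P(1) this assms(2,3)] show ?thesis
    using plegma_cong[OF P(3) assms(2)] by simp
qed

lemma enum_range:
  fixes f :: "nat \<Rightarrow> nat"
  assumes "strict_mono f"
  shows "enumerate (range f) n = f n"
  using assms
proof (induction n arbitrary: f)
  case 0
  have "(LEAST y. y \<in> range f) = f 0"
    by (rule Least_equality) (auto simp: "0" strict_mono_less_eq)
  then show ?case by (simp add: enumerate_0)
next
  case (Suc n)
  have "range f - {f 0} = range (\<lambda>i. f (Suc i))"
  proof
    show "range f - {f 0} \<subseteq> range (\<lambda>i. f (Suc i))"
    proof
      fix y assume "y \<in> range f - {f 0}"
      then obtain i where "y = f i" "i \<noteq> 0" by auto
      then show "y \<in> range (\<lambda>i. f (Suc i))" by (cases i) auto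
    qed
    show "range (\<lambda>i. f (Suc i)) \<subseteq> range f - {f 0}"
      using Suc.prems strict_mono_eq by fastforce
  qed
  moreover have "enumerate (range f) 0 = f 0"
  proof -
    have "(LEAST y. y \<in> range f) = f 0"
      by (rule Least_equality) (auto simp: Suc.prems strict_mono_less_eq)
    then show ?thesis by (simp add: enumerate_0)
  qed
  moreover have "strict_mono (\<lambda>i. f (Suc i))" using Suc.prems unfolding strict_mono_def by simp
  ultimately show ?case using Suc.IH by (simp add: enumerate_Suc')
qed

lemma nm_scale: "nm x F m (\<lambda>j. c * a j) = \<bar>c\<bar> * nm x F m a"
proof -
  have "(\<Sum>j=1..m. (c * a j) *\<^sub>R x (F j)) = c *\<^sub>R (\<Sum>j=1..m. a j *\<^sub>R x (F j))"
    by (simp add: scaleR_sum_right)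
  then show ?thesis unfolding nm_def by simp
qed

lemma nm_add: "nm x F m (\<lambda>j. a j + b j) \<le> nm x F m a + nm x F m b"
proof -
  have "(\<Sum>j=1..m. (a j + b j) *\<^sub>R x (F j)) = (\<Sum>j=1..m. a j *\<^sub>R x (F j)) + (\<Sum>j=1..m. b j *\<^sub>R x (F j))"
    by (simp add: scaleR_add_left sum.distrib)
  then show ?thesis unfolding nm_def by (simp add: norm_triangle_ineq)
qed

lemma Qex:
  assumes "1 \<le> k" "n \<ge> 1" "infinite M" "\<forall>s\<in>ksubsets UNIV k. norm (x s) \<le> C" "C \<ge> 0"
  shows "\<exists>M'\<subseteq>M. infinite M' \<and> (\<forall>m\<in>{1..n}. Stb x k m (1/real n) M')"
proof -
  have e: "1/real n > 0" using assms by simp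
  have "\<exists>M'\<subseteq>M. infinite M' \<and> (\<forall>m\<in>{1..p}. Stb x k m (1/real n) M')" for p
  proof (induction p)
    case 0 then show ?case using assms by auto
  next
    case (Suc p)
    then obtain M1 where M1: "M1 \<subseteq> M" "infinite M1" "\<forall>m\<in>{1..p}. Stb x k m (1/real n) M1" by blast
    from stab[OF assms(1) _ e M1(2) assms(4,5), of "Suc p"] obtain M2 where
      M2: "M2 \<subseteq> M1" "infinite M2" "Stb x k (Suc p) (1/real n) M2" by auto
    have "\<forall>m\<in>{1..Suc p}. Stb x k m (1/real n) M2"
      using M1(3) M2 Stb_mono by (metis atLeastAtMost_iff le_Suc_eq)
    then show ?case using M1 M2 by (intro exI[of _ M2]) auto
  qed
  then show ?thesis by blast
qed


theorem mainTheorem4: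
  fixes x :: "nat set \<Rightarrow> 'a::banach" and k :: nat
  assumes "k \<ge> 1"
    and "\<exists>C. \<forall>s\<in>ksubsets UNIV k. norm (x s) \<le> C"
  shows "\<exists>M. M \<subseteq> UNIV \<and> infinite M \<and>
           (\<exists>N. seminorm_c00 N \<and> generates_ksm x M k N)"
proof -
  from assms(2) obtain C0 where C0: "\<forall>s\<in>ksubsets UNIV k. norm (x s) \<le> C0" by blast
  define C where "C = max C0 0"
  have Cb: "\<forall>s\<in>ksubsets UNIV k. norm (x s) \<le> C" and C0': "C \<ge> 0"
    using C0 unfolding C_def by force+
  define Q where "Q n M \<longleftrightarrow> (\<forall>m\<in>{1..n}. Stb x k m (1/real n) M)" for n M
  define Ms where "Ms = rec_nat (UNIV::nat set) (\<lambda>n Mn. SOME M'. M' \<subseteq> Mn \<and> infinite M' \<and> Q (Suc n) M')"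
  have Ms0: "Ms 0 = UNIV" unfolding Ms_def by simp
  have MsS: "Ms (Suc n) = (SOME M'. M' \<subseteq> Ms n \<and> infinite M' \<and> Q (Suc n) M')" for n
    unfolding Ms_def by simp
  have ex: "\<exists>M'. M' \<subseteq> Ms n \<and> infinite M' \<and> Q (Suc n) M'" if "infinite (Ms n)" for n
    using Qex[OF assms(1) _ that Cb C0', of "Suc n"] unfolding Q_def by auto
  have inf: "infinite (Ms n)" for n
  proof (induction n)
    case 0 then show ?case using Ms0 by simp
  next
    case (Suc n) then show ?case using someI_ex[OF ex[OF Suc]] MsS by simp
  qed
  have MsP: "Ms (Suc n) \<subseteq> Ms n \<and> Q (Suc n) (Ms (Suc n))" for n
    using someI_ex[OF ex[OF inf[of n]]] MsS by simp
  have anti: "Ms n' \<subseteq> Ms n" if "n \<le> n'" for n n'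
    using lift_Suc_antimono_le[of Ms, OF _ that] MsP by blast
  have exd: "\<exists>y. y \<in> Ms n \<and> d < y" for n d
    using inf[of n] unfolding infinite_nat_iff_unbounded by blast
  define ds where "ds = rec_nat (LEAST y. y \<in> Ms 1) (\<lambda>n d. LEAST y. y \<in> Ms (Suc (Suc n)) \<and> d < y)"
  have ds0: "ds 0 = (LEAST y. y \<in> Ms 1)" unfolding ds_def by simp
  have dsS: "ds (Suc n) = (LEAST y. y \<in> Ms (Suc (Suc n)) \<and> ds n < y)" for n unfolding ds_def by simp
  have dsin: "ds n \<in> Ms (Suc n)" for n
  proof (cases n)
    case 0
    have "\<exists>y. y \<in> Ms 1" using exd by blast
    then have "(LEAST y. y \<in> Ms 1) \<in> Ms 1" by (rule LeastI_ex)
    then show ?thesis using 0 ds0 by simp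
  next
    case (Suc n')
    show ?thesis using LeastI_ex[OF exd[of "Suc (Suc n')" "ds n'"]] dsS Suc by simp
  qed
  have dsinc: "ds n < ds (Suc n)" for n
    using LeastI_ex[OF exd[of "Suc (Suc n)" "ds n"]] dsS by simp
  have smono: "strict_mono ds" using dsinc by (simp add: strict_mono_Suc_iff)
  define D where "D = range ds"
  have infD: "infinite D" unfolding D_def using smono strict_mono_imp_inj_on range_inj_infinite by blast
  have nthD: "nth_el D l = ds (l - 1)" for l
    unfolding nth_el_def D_def using enum_range[OF smono] by simp
  have tail: "ds i \<in> Ms (Suc n)" if "n \<le> i" for n i
    using dsin[of i] anti[of "Suc n" "Suc i"] that by auto
  define Gf where "Gf n = fam k (\<lambda>p. ds (n + p)) n" for n
  have Gpl: "plegma m (Ms (Suc n)) k (Gf n)" if "1 \<le> m" "m \<le> n" for m n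
  proof -
    have "strict_on (k*n) (\<lambda>p. ds (n + p))" unfolding strict_on_def using smono
      by (simp add: strict_mono_less)
    moreover have "\<forall>p<k*n. ds (n + p) \<in> Ms (Suc n)" using tail by simp
    ultimately have "plegma n (Ms (Suc n)) k (Gf n)" unfolding Gf_def
      using that assms(1) by (intro fam_plegma) auto
    then show ?thesis using plegma_trunc that by blast
  qed
  define sq where "sq f n = nm x (Gf n) n (\<lambda>j. f (j - 1))" for f :: "nat \<Rightarrow> real" and n
  define N where "N f = lim (sq f)" for f
  have sq_red: "sq f n = nm x (Gf n) m (\<lambda>j. f (j - 1))"
    if "\<forall>i\<ge>m. f i = 0" "m \<le> n" for f m n
  proof -
    have "(\<Sum>j=1..n. f (j-1) *\<^sub>R x (Gf n j)) = (\<Sum>j=1..m. f (j-1) *\<^sub>R x (Gf n j))"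
      by (rule sum.mono_neutral_right) (use that in auto)
    then show ?thesis unfolding sq_def nm_def by simp
  qed
  have StbQ: "Stb x k m (1 / real (Suc n)) (Ms (Suc n))" if "1 \<le> m" "m \<le> Suc n" for m n
    using MsP[of n] that unfolding Q_def by auto
  have conv: "sq f \<longlonglongrightarrow> N f" if f: "f \<in> c00" for f
  proof -
    obtain m0 where "{i. f i \<noteq> 0} \<subseteq> {..<m0}" using f finite_nat_bounded unfolding c00_def by blast
    define m where "m = Suc m0"
    have fz: "\<forall>i\<ge>m. f i = 0" using \<open>{i. f i \<noteq> 0} \<subseteq> {..<m0}\<close> unfolding m_def by force
    have m1: "1 \<le> m" unfolding m_def by simp
    define R where "R = 1 + (\<Sum>i<m. \<bar>f i\<bar>)"
    have Rpos: "R > 0" unfolding R_def by (simp add: add_pos_nonneg sum_nonneg)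
    have fR: "\<bar>f i\<bar> \<le> R" for i
    proof (cases "i < m")
      case True
      then have "\<bar>f i\<bar> \<le> (\<Sum>i<m. \<bar>f i\<bar>)" by (intro member_le_sum) auto
      then show ?thesis unfolding R_def by simp
    next
      case False then show ?thesis using fz Rpos by simp
    qed
    have cau: "\<bar>sq f n - sq f n'\<bar> \<le> R / real (Suc n)" if "m \<le> n" "n \<le> n'" for n n'
    proof -
      have G1: "plegma m (Ms (Suc n)) k (Gf n)" using Gpl m1 that by blast
      have G2: "plegma m (Ms (Suc n)) k (Gf n')"
        using Gpl[of m n'] m1 that plegma_mono anti[of "Suc n" "Suc n'"] by auto
      define b where "b j = f (j - 1) / R" for j
      have b1: "\<forall>j\<in>{1..m}. \<bar>b j\<bar> \<le> 1"
      proof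
        fix j :: nat
        have "\<bar>b j\<bar> = \<bar>f (j - 1)\<bar> / R" unfolding b_def using Rpos by simp
        also have "\<dots> \<le> R / R" using fR Rpos by (intro divide_right_mono) auto
        also have "\<dots> = 1" using Rpos by simp
        finally show "\<bar>b j\<bar> \<le> 1" .
      qed
      have "\<bar>nm x (Gf n) m b - nm x (Gf n') m b\<bar> \<le> 1 / real (Suc n)"
        using StbQ[of m n] m1 that G1 G2 b1 unfolding Stb_def by auto
      moreover have "(\<lambda>j. f (j - 1)) = (\<lambda>j. R * b j)" unfolding b_def using Rpos by auto
      then have "sq f n = R * nm x (Gf n) m b" "sq f n' = R * nm x (Gf n') m b"
        using sq_red[OF fz] that nm_scale[of x _ m R b] Rpos by auto
      ultimately have A: "\<bar>nm x (Gf n) m b - nm x (Gf n') m b\<bar> \<le> 1 / real (Suc n)"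
        and B: "\<bar>sq f n - sq f n'\<bar> = R * \<bar>nm x (Gf n) m b - nm x (Gf n') m b\<bar>"
        using Rpos by (simp_all add: right_diff_distrib[symmetric] abs_mult)
      have "\<bar>sq f n - sq f n'\<bar> \<le> R * (1 / real (Suc n))"
        unfolding B using A Rpos by (intro mult_left_mono) auto
      then show ?thesis by simp
    qed
    have "Cauchy (sq f)"
    proof (rule metric_CauchyI)
      fix e :: real assume e: "e > 0"
      obtain n0 where n0: "R / e < real n0" using reals_Archimedean2 by blast
      define n1 where "n1 = max n0 m"
      have "R / real (Suc n1) < e"
      proof -
        have "R / e < real (Suc n1)" using n0 unfolding n1_def by simp
        then show ?thesis using e by (simp add: divide_less_eq mult.commute)
      qed
      moreover have "dist (sq f p) (sq f p') \<le> R / real (Suc n1)" if "p \<ge> n1" "p' \<ge> n1" for p p'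
      proof -
        have mono: "R / real (Suc (min p p')) \<le> R / real (Suc n1)"
          using Rpos that by (intro divide_left_mono) auto
        have "\<bar>sq f p - sq f p'\<bar> \<le> R / real (Suc (min p p'))"
        proof (cases "p \<le> p'")
          case True then show ?thesis using cau[of p p'] that unfolding n1_def by auto
        next
          case False then show ?thesis using cau[of p' p] that unfolding n1_def by (auto simp: abs_minus_commute)
        qed
        then show ?thesis using mono by (simp add: dist_real_def)
      qed
      ultimately show "\<exists>M. \<forall>p\<ge>M. \<forall>p'\<ge>M. dist (sq f p) (sq f p') < e"
        by (meson le_less_trans)
    qed
    then have "convergent (sq f)" by (simp add: Cauchy_convergent_iff)
    then show ?thesis unfolding N_def by (simp add: convergent_LIMSEQ_iff)
  qed
  have semi: "seminorm_c00 N" unfolding seminorm_c00_def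
  proof (intro conjI ballI allI)
    fix f assume f: "f \<in> c00"
    show "0 \<le> N f" using conv[OF f] by (rule LIMSEQ_le_const) (auto simp: sq_def nm_def)
  next
    fix f c assume f: "f \<in> c00"
    have "sq (\<lambda>i. c * f i) = (\<lambda>n. \<bar>c\<bar> * sq f n)"
      unfolding sq_def using nm_scale by (auto simp: fun_eq_iff)
    moreover have "(\<lambda>n. \<bar>c\<bar> * sq f n) \<longlonglongrightarrow> \<bar>c\<bar> * N f" using conv[OF f] by (rule tendsto_mult_left)
    ultimately show "N (\<lambda>i. c * f i) = \<bar>c\<bar> * N f" unfolding N_def by (simp add: limI)
  next
    fix f g assume f: "f \<in> c00" and g: "g \<in> c00"
    have fg: "(\<lambda>i. f i + g i) \<in> c00"
    proof -
      have "{i. f i + g i \<noteq> 0} \<subseteq> {i. f i \<noteq> 0} \<union> {i. g i \<noteq> 0}" by auto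
      then show ?thesis using f g unfolding c00_def by (auto intro: finite_subset)
    qed
    have "sq (\<lambda>i. f i + g i) n \<le> sq f n + sq g n" for n
      unfolding sq_def using nm_add by simp
    then show "N (\<lambda>i. f i + g i) \<le> N f + N g"
      using conv[OF fg] tendsto_add[OF conv[OF f] conv[OF g]] by (intro LIMSEQ_le) auto
  qed
  define \<delta> where "\<delta> l = 2 * inverse (real (Suc l))" for l
  have dpos: "\<forall>n. 0 < \<delta> n" unfolding \<delta>_def by simp
  have dlim: "\<delta> \<longlonglongrightarrow> 0"
    unfolding \<delta>_def using tendsto_mult[OF tendsto_const LIMSEQ_inverse_real_of_nat, of 2] by simp
  have est: "\<bar>norm (\<Sum>j=1..m. a j *\<^sub>R x (F j)) - N (comb_e m a)\<bar> \<le> \<delta> l"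
    if H: "1 \<le> m \<and> m \<le> l \<and> plegma m D k F \<and> elem (F 1) 1 \<ge> nth_el D l \<and> (\<forall>j\<in>{1..m}. \<bar>a j\<bar> \<le> 1)"
    for l m F a
  proof -
    have m1: "1 \<le> m" and ml: "m \<le> l" and pF: "plegma m D k F" and el: "elem (F 1) 1 \<ge> ds (l - 1)"
      and a1: "\<forall>j\<in>{1..m}. \<bar>a j\<bar> \<le> 1" using H nthD by auto
    have l1: "l = Suc (l - 1)" using m1 ml by simp
    have pF1: "plegma m {y\<in>D. ds (l - 1) \<le> y} k F" by (rule plegma_restrict[OF pF m1 assms(1) el])
    have "{y\<in>D. ds (l - 1) \<le> y} \<subseteq> Ms l"
    proof
      fix y assume "y \<in> {y\<in>D. ds (l - 1) \<le> y}"
      then obtain i where "y = ds i" "ds (l - 1) \<le> ds i" unfolding D_def by auto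
      then have "l - 1 \<le> i" using smono strict_mono_less_eq by blast
      then show "y \<in> Ms l" using tail \<open>y = ds i\<close> l1 by metis
    qed
    then have pF2: "plegma m (Ms (Suc (l - 1))) k F" using pF1 plegma_mono l1 by metis
    define f where "f = comb_e m a"
    have fc: "f \<in> c00"
    proof -
      have "{i. f i \<noteq> 0} \<subseteq> {..<m}" unfolding f_def comb_e_def by auto
      then show ?thesis unfolding c00_def by (auto intro: finite_subset)
    qed
    have fz: "\<forall>i\<ge>m. f i = 0" unfolding f_def comb_e_def by auto
    have fa: "\<forall>j\<in>{1..m}. f (j - 1) = a j" unfolding f_def comb_e_def by auto
    have close: "\<bar>nm x F m a - sq f n\<bar> \<le> 1 / real l" if n: "n \<ge> l" for n
    proof -
      have "sq f n = nm x (Gf n) m a" using sq_red[OF fz, of n] nm_cong2[OF fa] n ml by simp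
      moreover have "plegma m (Ms (Suc (l - 1))) k (Gf n)"
        using Gpl[of m n] m1 ml n plegma_mono anti[of "Suc (l - 1)" "Suc n"] by auto
      ultimately show ?thesis using StbQ[of m "l - 1"] m1 ml l1 pF2 a1 unfolding Stb_def
        by (metis of_nat_Suc)
    qed
    have "(\<lambda>n. \<bar>nm x F m a - sq f n\<bar>) \<longlonglongrightarrow> \<bar>nm x F m a - N f\<bar>"
      by (intro tendsto_intros conv[OF fc])
    then have "\<bar>nm x F m a - N f\<bar> \<le> 1 / real l"
      by (rule LIMSEQ_le_const2) (use close in blast)
    moreover have "1 / real l \<le> \<delta> l"
    proof -
      have "real l \<ge> 1" using m1 ml by simp
      then have "real (Suc l) \<le> 2 * real l" by simp
      then have "1 / real l \<le> 2 / real (Suc l)" using \<open>real l \<ge> 1\<close> by (simp add: field_simps)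
      then show ?thesis unfolding \<delta>_def by (simp add: divide_inverse)
    qed
    ultimately show ?thesis unfolding nm_def f_def by simp
  qed
  have "generates_ksm x D k N" unfolding generates_ksm_def
    using dpos dlim est by blast
  then show ?thesis using infD semi by blast
qed

end
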